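(* Suppose that $\mathcal{H}$ is a group of automorphisms of a totally disconnected, locally compact group $G$ that is virtually flat. Then $\mathcal{H}_{FC_d}$ is a normal subgroup of $\mathcal{H}$ that contains every flat subgroup of $\mathcal{H}$ of finite index. In particular, $\mathcal{H}_{FC_d}$ has finite index in $\mathcal{H}$.
   Context: Automorphisms are continuous with continuous inverse. $\mathcal{B}(G)$ is the set of compact, open subgroups of $G$ with metric $d(V,W)=\log\bigl(|V:V\cap W|\cdot|W:W\cap V|\bigr)$. A set $B$ of automorphisms is bounded if $B.V=\{\beta(V):\beta\in B\}$ has bounded diameter for some (equivalently every) $V\in\mathcal{B}(G)$. $\mathcal{H}_{FC_d}=\{\varphi\in\mathcal{H}:\{\psi\varphi\psi^{-1}:\psi\in\mathcal{H}\}\text{ is bounded}\}$. The scale of $\varphi$ is $s_G(\varphi)=\min\{|\varphi(V):\varphi(V)\cap V|:V\in\mathcal{B}(G)\}$; a group $\mathcal{K}$ of automorphisms is flat if there is $O\in\mathcal{B}(G)$ with $|\varphi(O):\varphi(O)\cap O|=s_G(\varphi)$ for all $\varphi\in\mathcal{K}$; $\mathcal{H}$ is virtually flat if it has a flat subgroup of finite index. *)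

theory Defs
  imports "HOL-Analysis.Analysis" "HOL-Algebra.Algebra"
begin

definition tdlc_group :: "('a, 'b) monoid_scheme \<Rightarrow> 'a topology \<Rightarrow> bool" where
  "tdlc_group G T \<longleftrightarrow> group G \<and> topspace T = carrier G
     \<and> continuous_map (prod_topology T T) T (\<lambda>(x, y). x \<otimes>\<^bsub>G\<^esub> y)
     \<and> continuous_map T T (\<lambda>x. inv\<^bsub>G\<^esub> x)
     \<and> locally_compact_space T
     \<and> (\<forall>x \<in> topspace T. Collect (connected_component_of T x) = {x})"

text \<open>Topological automorphisms (continuous with continuous inverse), as elements of
  the group of bijections of the carrier (extensional functions, composition).\<close>
definition top_aut :: "('a, 'b) monoid_scheme \<Rightarrow> 'a topology \<Rightarrow> ('a \<Rightarrow> 'a) set" where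
  "top_aut G T = {\<phi> \<in> auto G. homeomorphic_map T T \<phi>}"

definition aut_grp :: "('a, 'b) monoid_scheme \<Rightarrow> ('a \<Rightarrow> 'a) set \<Rightarrow> ('a \<Rightarrow> 'a) monoid" where
  "aut_grp G H = (BijGroup (carrier G)) \<lparr>carrier := H\<rparr>"

definition COS :: "('a, 'b) monoid_scheme \<Rightarrow> 'a topology \<Rightarrow> 'a set set" where
  "COS G T = {V. subgroup V G \<and> compactin T V \<and> openin T V}"

definition idx :: "('a, 'b) monoid_scheme \<Rightarrow> 'a set \<Rightarrow> 'a set \<Rightarrow> nat" where
  "idx G V W = card {W #>\<^bsub>G\<^esub> a | a. a \<in> V}"

definition cos_dist :: "('a, 'b) monoid_scheme \<Rightarrow> 'a set \<Rightarrow> 'a set \<Rightarrow> real" where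
  "cos_dist G V W = ln (real (idx G V (V \<inter> W) * idx G W (W \<inter> V)))"

definition bounded_auts :: "('a, 'b) monoid_scheme \<Rightarrow> 'a topology \<Rightarrow> ('a \<Rightarrow> 'a) set \<Rightarrow> bool" where
  "bounded_auts G T B \<longleftrightarrow> (\<exists>V \<in> COS G T. \<exists>M::real.
      \<forall>\<beta> \<in> B. \<forall>\<gamma> \<in> B. cos_dist G (\<beta> ` V) (\<gamma> ` V) \<le> M)"

definition FCd :: "('a, 'b) monoid_scheme \<Rightarrow> 'a topology \<Rightarrow> ('a \<Rightarrow> 'a) set \<Rightarrow> ('a \<Rightarrow> 'a) set" where
  "FCd G T H = {\<phi> \<in> H. bounded_auts G T
      {\<psi> \<otimes>\<^bsub>aut_grp G H\<^esub> \<phi> \<otimes>\<^bsub>aut_grp G H\<^esub> inv\<^bsub>aut_grp G H\<^esub> \<psi> | \<psi>. \<psi> \<in> H}}"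

definition scale :: "('a, 'b) monoid_scheme \<Rightarrow> 'a topology \<Rightarrow> ('a \<Rightarrow> 'a) \<Rightarrow> nat" where
  "scale G T \<phi> = (LEAST n. \<exists>V \<in> COS G T. n = idx G (\<phi> ` V) (\<phi> ` V \<inter> V))"

definition flat :: "('a, 'b) monoid_scheme \<Rightarrow> 'a topology \<Rightarrow> ('a \<Rightarrow> 'a) set \<Rightarrow> bool" where
  "flat G T K \<longleftrightarrow> (\<exists>U \<in> COS G T. \<forall>\<phi> \<in> K. idx G (\<phi> ` U) (\<phi> ` U \<inter> U) = scale G T \<phi>)"

definition finite_index :: "('c, 'd) monoid_scheme \<Rightarrow> 'c set \<Rightarrow> bool" where
  "finite_index H K \<longleftrightarrow> finite (rcosets\<^bsub>H\<^esub> K)"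

definition virtually_flat :: "('a, 'b) monoid_scheme \<Rightarrow> 'a topology \<Rightarrow> ('a \<Rightarrow> 'a) set \<Rightarrow> bool" where
  "virtually_flat G T H \<longleftrightarrow> (\<exists>K. subgroup K (aut_grp G H) \<and> flat G T K
      \<and> finite_index (aut_grp G H) K)"

end

theory Submission
  imports Defs
begin


locale setting = group G for G :: "('a, 'b) monoid_scheme" (structure) +
  fixes T :: "'a topology" and H :: "('a \<Rightarrow> 'a) set"
  assumes tdlc: "tdlc_group G T" and Hsub: "H \<subseteq> top_aut G T"
    and Hgrp: "subgroup H (BijGroup (carrier G))"
begin

abbreviation "A \<equiv> aut_grp G H"

lemma topsp: "topspace T = carrier G" using tdlc by (simp add: tdlc_group_def)

lemma multc: "continuous_map (prod_topology T T) T (\<lambda>(x, y). x \<otimes> y)"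
  using tdlc by (simp add: tdlc_group_def)

lemma carrA: "carrier A = H" by (simp add: aut_grp_def)

lemma grpA: "group A"
  unfolding aut_grp_def
  by (rule subgroup.subgroup_is_group[OF Hgrp group_BijGroup])

lemma H_Bij: "x \<in> H \<Longrightarrow> x \<in> Bij (carrier G)"
  using subgroup.subset[OF Hgrp] by (auto simp: BijGroup_def)

lemma H_hom: "x \<in> H \<Longrightarrow> x \<in> hom G G"
  using Hsub by (auto simp: top_aut_def auto_def)

lemma H_homeo: "x \<in> H \<Longrightarrow> homeomorphic_map T T x"
  using Hsub by (auto simp: top_aut_def)

lemma multA: "x \<in> H \<Longrightarrow> y \<in> H \<Longrightarrow> x \<otimes>\<^bsub>A\<^esub> y = compose (carrier G) x y"
  using H_Bij by (simp add: aut_grp_def BijGroup_def)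

lemma oneA: "\<one>\<^bsub>A\<^esub> = (\<lambda>x\<in>carrier G. x)"
  by (simp add: aut_grp_def BijGroup_def)

lemma img_mult: "x \<in> H \<Longrightarrow> y \<in> H \<Longrightarrow> V \<subseteq> carrier G \<Longrightarrow>
   (x \<otimes>\<^bsub>A\<^esub> y) ` V = x ` (y ` V)"
  by (auto simp: multA compose_def)

lemma img_one: "V \<subseteq> carrier G \<Longrightarrow> \<one>\<^bsub>A\<^esub> ` V = V"
  by (auto simp: oneA)

lemma H_funcset: "x \<in> H \<Longrightarrow> V \<subseteq> carrier G \<Longrightarrow> x ` V \<subseteq> carrier G"
  using H_Bij Bij_imp_funcset by fastforce

lemma H_inj: "x \<in> H \<Longrightarrow> inj_on x (carrier G)"
  using H_Bij by (auto simp: Bij_def bij_betw_def)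

lemma invA_closed: "x \<in> H \<Longrightarrow> inv\<^bsub>A\<^esub> x \<in> H"
  using group.inv_closed[OF grpA] carrA by auto

lemma img_inv: "x \<in> H \<Longrightarrow> V \<subseteq> carrier G \<Longrightarrow> (inv\<^bsub>A\<^esub> x) ` (x ` V) = V"
proof -
  assume x: "x \<in> H" and V: "V \<subseteq> carrier G"
  have "(inv\<^bsub>A\<^esub> x) ` (x ` V) = (inv\<^bsub>A\<^esub> x \<otimes>\<^bsub>A\<^esub> x) ` V"
    using img_mult[OF invA_closed[OF x] x V] by simp
  also have "\<dots> = V" using group.l_inv[OF grpA] x carrA img_one V by auto
  finally show ?thesis .
qed

lemma img_inv2: "x \<in> H \<Longrightarrow> V \<subseteq> carrier G \<Longrightarrow> x ` ((inv\<^bsub>A\<^esub> x) ` V) = V"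
proof -
  assume x: "x \<in> H" and V: "V \<subseteq> carrier G"
  have "x ` ((inv\<^bsub>A\<^esub> x) ` V) = (x \<otimes>\<^bsub>A\<^esub> inv\<^bsub>A\<^esub> x) ` V"
    using img_mult[OF x invA_closed[OF x] V] by simp
  also have "\<dots> = V" using group.r_inv[OF grpA] x carrA img_one V by auto
  finally show ?thesis .
qed

lemma img_subgroup: "x \<in> H \<Longrightarrow> subgroup V G \<Longrightarrow> subgroup (x ` V) G"
  using group_hom.subgroup_img_is_subgroup[of G G x V] H_hom
  by (simp add: group_hom_def group_hom_axioms_def is_group)

lemma img_COS: "x \<in> H \<Longrightarrow> V \<in> COS G T \<Longrightarrow> x ` V \<in> COS G T"
  unfolding COS_def
  using img_subgroup H_homeo homeomorphic_map_openness homeomorphic_map_compactness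
    subgroup.subset topsp by fastforce

lemma img_rcos: "x \<in> H \<Longrightarrow> D \<subseteq> carrier G \<Longrightarrow> a \<in> carrier G \<Longrightarrow>
   x ` (D #> a) = (x ` D) #> x a"
  using H_hom by (force simp: r_coset_def hom_mult)

lemma img_Int: "x \<in> H \<Longrightarrow> V \<subseteq> carrier G \<Longrightarrow> W \<subseteq> carrier G \<Longrightarrow> x ` V \<inter> x ` W = x ` (V \<inter> W)"
  using H_inj by (auto simp: inj_on_def) blast

end


context setting begin

definition cs :: "'a set \<Rightarrow> 'a set \<Rightarrow> 'a set set" where
  "cs V W = {(V \<inter> W) #> a | a. a \<in> V}"

lemma idx_cs: "idx G V (V \<inter> W) = card (cs V W)"
  by (simp add: idx_def cs_def)

lemma COS_sub: "V \<in> COS G T \<Longrightarrow> subgroup V G" by (simp add: COS_def)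
lemma COS_carr: "V \<in> COS G T \<Longrightarrow> V \<subseteq> carrier G" by (simp add: COS_def subgroup.subset)

lemma Int_sub: "V \<in> COS G T \<Longrightarrow> W \<in> COS G T \<Longrightarrow> subgroup (V \<inter> W) G"
  using subgroups_Inter_pair COS_sub by blast

lemma rcos_open: assumes D: "openin T D" "D \<subseteq> carrier G" and a: "a \<in> carrier G"
  shows "openin T (D #> a)"
proof -
  have c: "continuous_map T T (\<lambda>x. x \<otimes> inv a)"
  proof -
    have "continuous_map T (prod_topology T T) (\<lambda>x. (x, inv a))"
      by (intro continuous_map_pairedI) (auto simp: topsp a continuous_map_id[unfolded id_def])
    from continuous_map_compose[OF this multc] show ?thesis by (simp add: o_def)
  qed
  have "D #> a = {x \<in> topspace T. x \<otimes> inv a \<in> D}"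
  proof safe
    fix x assume "x \<in> D #> a"
    then obtain d where d: "d \<in> D" "x = d \<otimes> a" by (auto simp: r_coset_def)
    with D a show "x \<in> topspace T" by (auto simp: topsp)
    from d D a show "x \<otimes> inv a \<in> D" by (auto simp: m_assoc)
  next
    fix x assume "x \<in> topspace T" "x \<otimes> inv a \<in> D"
    hence "x = (x \<otimes> inv a) \<otimes> a" using a topsp by (simp add: m_assoc)
    thus "x \<in> D #> a" using \<open>x \<otimes> inv a \<in> D\<close> unfolding r_coset_def by blast
  qed
  thus ?thesis using openin_continuous_map_preimage[OF c D(1)] by simp
qed

lemma cs_finite: assumes V: "V \<in> COS G T" and W: "W \<in> COS G T"
  shows "finite (cs V W)"
proof -
  let ?D = "V \<inter> W"
  have sD: "subgroup ?D G" using Int_sub V W .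
  have oD: "openin T ?D" using V W by (auto simp: COS_def)
  have Vc: "V \<subseteq> carrier G" using COS_carr V .
  have op: "\<forall>U \<in> cs V W. openin T U"
    using rcos_open[OF oD] Vc by (auto simp: cs_def)
  have cov: "V \<subseteq> \<Union>(cs V W)"
  proof
    fix a assume "a \<in> V"
    hence "a \<in> ?D #> a" using rcos_self sD Vc by blast
    thus "a \<in> \<Union>(cs V W)" using \<open>a \<in> V\<close> by (auto simp: cs_def)
  qed
  have "compactin T V" using V by (simp add: COS_def)
  then obtain F where F: "finite F" "F \<subseteq> cs V W" "V \<subseteq> \<Union>F"
    using op cov unfolding compactin_def by metis
  have "cs V W \<subseteq> F"
  proof
    fix c assume "c \<in> cs V W"
    then obtain a where a: "a \<in> V" "c = ?D #> a" by (auto simp: cs_def)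
    then obtain f where f: "f \<in> F" "a \<in> f" using F by blast
    then obtain b where b: "b \<in> V" "f = ?D #> b" using F by (auto simp: cs_def)
    have "?D #> b = ?D #> a" using repr_independence[of a ?D b] f b sD Vc by blast
    thus "c \<in> F" using a b f by simp
  qed
  thus ?thesis using F finite_subset by blast
qed

lemma cs_ne: "V \<in> COS G T \<Longrightarrow> cs V W \<noteq> {}"
  using subgroup.one_closed[OF COS_sub] by (auto simp: cs_def)

lemma cs_pos: "V \<in> COS G T \<Longrightarrow> W \<in> COS G T \<Longrightarrow> card (cs V W) \<ge> 1"
  using cs_finite cs_ne by (simp add: Suc_le_eq card_gt_0_iff)

lemma cs_tri: assumes V: "V \<in> COS G T" and W: "W \<in> COS G T" and Q: "Q \<in> COS G T"
  shows "card (cs V Q) \<le> card (cs W Q) * card (cs V W)"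
proof -
  have Vc: "V \<subseteq> carrier G" and Wc: "W \<subseteq> carrier G" using COS_carr V W by auto
  have sVX: "subgroup (V \<inter> Q) G" and sWX: "subgroup (W \<inter> Q) G" and sVW: "subgroup (V \<inter> W) G"
    using Int_sub V W Q by auto
  have sV: "subgroup V G" using COS_sub V .
  define g where "g = (\<lambda>(Z, Y). (V \<inter> Q) #> ((SOME b. b \<in> V \<inter> Z) \<otimes> (SOME r. r \<in> Y)))"
  have "cs V Q \<subseteq> g ` (cs W Q \<times> cs V W)"
  proof
    fix c assume "c \<in> cs V Q"
    then obtain a where a: "a \<in> V" "c = (V \<inter> Q) #> a" by (auto simp: cs_def)
    let ?Y = "(V \<inter> W) #> a"
    have aY: "a \<in> ?Y" using rcos_self sVW Vc a by blast
    define r where "r = (SOME r. r \<in> ?Y)"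
    have rY: "r \<in> ?Y" unfolding r_def using aY by (rule someI)
    have ac: "a \<in> carrier G" using a Vc by auto
    have rc: "r \<in> carrier G" using rY ac subgroup.elemrcos_carrier[OF sVW is_group] by blast
    have "r \<otimes> inv a \<in> V \<inter> W" using subgroup.rcos_module_imp[OF sVW is_group ac rY] .
    hence bVW: "a \<otimes> inv r \<in> V \<inter> W"
      using subgroup.m_inv_closed[OF sVW] ac rc by (metis inv_mult_group inv_inv inv_closed)
    define b where "b = a \<otimes> inv r"
    have bc: "b \<in> carrier G" using b_def ac rc by simp
    have abr: "a = b \<otimes> r" using ac rc by (simp add: b_def m_assoc)
    let ?Z = "(W \<inter> Q) #> b"
    have bZ: "b \<in> V \<inter> ?Z" using rcos_self[OF bc sWX] bVW b_def by auto
    define b' where "b' = (SOME b. b \<in> V \<inter> ?Z)"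
    have b'Z: "b' \<in> V \<inter> ?Z" unfolding b'_def using bZ by (rule someI)
    have b'c: "b' \<in> carrier G" using b'Z Vc by auto
    have "b' \<otimes> inv b \<in> W \<inter> Q" using subgroup.rcos_module_imp[OF sWX is_group bc] b'Z by blast
    moreover have "b' \<otimes> inv b \<in> V" using b'Z bVW b_def sV
      by (metis IntD1 subgroup.m_closed subgroup.m_inv_closed)
    ultimately have bb: "b' \<otimes> inv b \<in> V \<inter> Q" by blast
    have "b' \<otimes> r = (b' \<otimes> inv b) \<otimes> (b \<otimes> r)" using b'c bc rc by (simp add: m_assoc inv_solve_left)
    hence "b' \<otimes> r \<in> (V \<inter> Q) #> a" using abr bb rcosI[of "b' \<otimes> inv b" "V \<inter> Q" a] ac
        subgroup.subset[OF sVX] by simp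
    hence "(V \<inter> Q) #> a = (V \<inter> Q) #> (b' \<otimes> r)" using repr_independence sVX ac by blast
    hence "c = g (?Z, ?Y)" using a by (simp add: g_def b'_def r_def)
    moreover have "?Z \<in> cs W Q" using bVW b_def by (auto simp: cs_def)
    moreover have "?Y \<in> cs V W" using a by (auto simp: cs_def)
    ultimately show "c \<in> g ` (cs W Q \<times> cs V W)" by blast
  qed
  hence "card (cs V Q) \<le> card (g ` (cs W Q \<times> cs V W))"
    using cs_finite W Q V by (intro card_mono) auto
  also have "\<dots> \<le> card (cs W Q \<times> cs V W)" using cs_finite W Q V by (intro card_image_le) auto
  finally show ?thesis by (simp add: card_cartesian_product)
qed

end


context setting begin

definition dd :: "'a set \<Rightarrow> 'a set \<Rightarrow> nat" where
  "dd V W = card (cs V W) * card (cs W V)"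

lemma cos_dist_dd: "cos_dist G V W = ln (real (dd V W))"
  using idx_cs[of W V] by (simp add: cos_dist_def dd_def idx_cs Int_commute)

lemma dd_sym: "dd V W = dd W V" by (simp add: dd_def)

lemma dd_pos: "V \<in> COS G T \<Longrightarrow> W \<in> COS G T \<Longrightarrow> dd V W \<ge> 1"
  using cs_pos by (simp add: dd_def)

lemma dd_tri: assumes "V \<in> COS G T" "W \<in> COS G T" "Q \<in> COS G T"
  shows "dd V Q \<le> dd V W * dd W Q"
proof -
  have 1: "card (cs V Q) \<le> card (cs W Q) * card (cs V W)" using cs_tri assms by blast
  have 2: "card (cs Q V) \<le> card (cs W V) * card (cs Q W)" using cs_tri assms by blast
  have "dd V Q \<le> (card (cs W Q) * card (cs V W)) * (card (cs W V) * card (cs Q W))"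
    unfolding dd_def using mult_le_mono[OF 1 2] .
  thus ?thesis by (simp add: dd_def algebra_simps)
qed

lemma cs_img: assumes x: "x \<in> H" and V: "V \<in> COS G T" and W: "W \<in> COS G T"
  shows "cs (x ` V) (x ` W) = (image x) ` cs V W"
proof -
  have Vc: "V \<subseteq> carrier G" "W \<subseteq> carrier G" using COS_carr V W by auto
  have "cs (x ` V) (x ` W) = {(x ` (V \<inter> W)) #> x a | a. a \<in> V}"
    unfolding cs_def img_Int[OF x Vc] by blast
  also have "\<dots> = {x ` ((V \<inter> W) #> a) | a. a \<in> V}"
    using img_rcos[OF x] Vc by (metis (no_types, opaque_lifting) inf.coboundedI1 subsetD)
  also have "\<dots> = (image x) ` cs V W" by (auto simp: cs_def)
  finally show ?thesis .
qed

lemma card_cs_img: assumes x: "x \<in> H" and V: "V \<in> COS G T" and W: "W \<in> COS G T"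
  shows "card (cs (x ` V) (x ` W)) = card (cs V W)"
proof -
  have Vc: "V \<subseteq> carrier G" using COS_carr V by auto
  have "cs V W \<subseteq> Pow (carrier G)"
    using Vc by (auto simp: cs_def r_coset_def)
  hence "inj_on (image x) (cs V W)"
    using inj_on_image_Pow[OF H_inj[OF x]] inj_on_subset by blast
  thus ?thesis using cs_img[OF assms] card_image by metis
qed

lemma dd_img: "x \<in> H \<Longrightarrow> V \<in> COS G T \<Longrightarrow> W \<in> COS G T \<Longrightarrow> dd (x ` V) (x ` W) = dd V W"
  by (simp add: dd_def card_cs_img)

lemma dd_mult: assumes x: "x \<in> H" and y: "y \<in> H" and U: "U \<in> COS G T"
  shows "dd ((x \<otimes>\<^bsub>A\<^esub> y) ` U) U \<le> dd (y ` U) U * dd (x ` U) U"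
proof -
  have Uc: "U \<subseteq> carrier G" using COS_carr U .
  have "dd ((x \<otimes>\<^bsub>A\<^esub> y) ` U) U = dd (x ` (y ` U)) U" using img_mult[OF x y Uc] by simp
  also have "\<dots> \<le> dd (x ` (y ` U)) (x ` U) * dd (x ` U) U"
    using dd_tri img_COS x y U by blast
  also have "\<dots> = dd (y ` U) U * dd (x ` U) U" using dd_img x img_COS y U by simp
  finally show ?thesis .
qed

lemma dd_invA: assumes x: "x \<in> H" and U: "U \<in> COS G T"
  shows "dd ((inv\<^bsub>A\<^esub> x) ` U) U = dd (x ` U) U"
proof -
  have Uc: "U \<subseteq> carrier G" using COS_carr U .
  have "dd ((inv\<^bsub>A\<^esub> x) ` U) U = dd (x ` ((inv\<^bsub>A\<^esub> x) ` U)) (x ` U)"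
    using dd_img[OF x img_COS[OF invA_closed[OF x] U] U] by simp
  also have "\<dots> = dd U (x ` U)" using img_inv2[OF x Uc] by simp
  finally show ?thesis by (simp add: dd_sym)
qed

lemma bounded_iff: assumes B: "B \<subseteq> H" and U: "U \<in> COS G T"
  shows "bounded_auts G T B \<longleftrightarrow> (\<exists>R. \<forall>\<beta>\<in>B. real (dd (\<beta> ` U) U) \<le> R)"
proof
  assume "bounded_auts G T B"
  then obtain V M where V: "V \<in> COS G T" and M: "\<forall>\<beta>\<in>B. \<forall>\<gamma>\<in>B. cos_dist G (\<beta> ` V) (\<gamma> ` V) \<le> M"
    unfolding bounded_auts_def by blast
  show "\<exists>R. \<forall>\<beta>\<in>B. real (dd (\<beta> ` U) U) \<le> R"
  proof (cases "B = {}")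
    case True thus ?thesis by auto
  next
    case False
    then obtain \<beta>0 where b0: "\<beta>0 \<in> B" by blast
    have M': "real (dd (\<beta> ` V) (\<gamma> ` V)) \<le> exp M" if "\<beta> \<in> B" "\<gamma> \<in> B" for \<beta> \<gamma>
    proof -
      have pos: "real (dd (\<beta> ` V) (\<gamma> ` V)) > 0" using dd_pos img_COS V B that
        by (metis le_numeral_extra(2) not_less_eq_eq of_nat_0_less_iff subsetD zero_less_one_class.zero_le_one gr0I)
      have "ln (real (dd (\<beta> ` V) (\<gamma> ` V))) \<le> M" using M that cos_dist_dd by metis
      thus ?thesis using pos by (metis exp_ln exp_le_cancel_iff)
    qed
    let ?R = "real (dd U V) * exp M * real (dd (\<beta>0 ` V) U)"
    have "real (dd (\<beta> ` U) U) \<le> ?R" if b: "\<beta> \<in> B" for \<beta>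
    proof -
      have bH: "\<beta> \<in> H" "\<beta>0 \<in> H" using b b0 B by auto
      have C: "\<beta> ` U \<in> COS G T" "\<beta> ` V \<in> COS G T" "\<beta>0 ` V \<in> COS G T"
        using img_COS bH U V by auto
      have "dd (\<beta> ` U) U \<le> dd (\<beta> ` U) (\<beta> ` V) * dd (\<beta> ` V) U"
        using dd_tri C U by blast
      also have "\<dots> \<le> dd (\<beta> ` U) (\<beta> ` V) * (dd (\<beta> ` V) (\<beta>0 ` V) * dd (\<beta>0 ` V) U)"
        using dd_tri C U by (intro mult_le_mono2) blast
      also have "\<dots> = dd U V * dd (\<beta> ` V) (\<beta>0 ` V) * dd (\<beta>0 ` V) U"
        using dd_img bH U V by simp
      finally have "real (dd (\<beta> ` U) U) \<le> real (dd U V) * real (dd (\<beta> ` V) (\<beta>0 ` V)) * real (dd (\<beta>0 ` V) U)"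
        by (metis of_nat_le_iff of_nat_mult)
      also have "\<dots> \<le> ?R"
        using M'[OF b b0] by (intro mult_right_mono mult_left_mono) auto
      finally show ?thesis .
    qed
    thus ?thesis by blast
  qed
next
  assume "\<exists>R. \<forall>\<beta>\<in>B. real (dd (\<beta> ` U) U) \<le> R"
  then obtain R where R: "\<forall>\<beta>\<in>B. real (dd (\<beta> ` U) U) \<le> R" by blast
  define R' where "R' = max R 1"
  have R': "\<forall>\<beta>\<in>B. real (dd (\<beta> ` U) U) \<le> R'" "R' \<ge> 1" using R unfolding R'_def by force+
  have "cos_dist G (\<beta> ` U) (\<gamma> ` U) \<le> ln (R' * R')" if "\<beta> \<in> B" "\<gamma> \<in> B" for \<beta> \<gamma>
  proof -
    have bH: "\<beta> \<in> H" "\<gamma> \<in> H" using that B by auto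
    have C: "\<beta> ` U \<in> COS G T" "\<gamma> ` U \<in> COS G T" using img_COS bH U by auto
    have "dd (\<beta> ` U) (\<gamma> ` U) \<le> dd (\<beta> ` U) U * dd U (\<gamma> ` U)" using dd_tri C U by blast
    hence "real (dd (\<beta> ` U) (\<gamma> ` U)) \<le> real (dd (\<beta> ` U) U) * real (dd (\<gamma> ` U) U)"
      by (metis of_nat_le_iff of_nat_mult dd_sym)
    also have "\<dots> \<le> R' * R'" using R' that by (intro mult_mono) auto
    finally have le: "real (dd (\<beta> ` U) (\<gamma> ` U)) \<le> R' * R'" .
    have pos: "real (dd (\<beta> ` U) (\<gamma> ` U)) > 0" using dd_pos[OF C] by simp
    show ?thesis unfolding cos_dist_dd using le pos by simp
  qed
  thus "bounded_auts G T B" unfolding bounded_auts_def using U by blast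
qed

end


context setting begin

abbreviation cj where "cj \<psi> \<phi> \<equiv> \<psi> \<otimes>\<^bsub>A\<^esub> \<phi> \<otimes>\<^bsub>A\<^esub> inv\<^bsub>A\<^esub> \<psi>"

lemma cj_closed: "\<psi> \<in> H \<Longrightarrow> \<phi> \<in> H \<Longrightarrow> cj \<psi> \<phi> \<in> H"
proof -
  interpret A: group A by (rule grpA)
  assume "\<psi> \<in> H" "\<phi> \<in> H"
  hence "\<psi> \<in> carrier A" "\<phi> \<in> carrier A" using carrA by auto
  hence "cj \<psi> \<phi> \<in> carrier A" by simp
  thus ?thesis using carrA by simp
qed

lemma cj_one: "\<psi> \<in> H \<Longrightarrow> cj \<psi> \<one>\<^bsub>A\<^esub> = \<one>\<^bsub>A\<^esub>"
proof -
  interpret A: group A by (rule grpA)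
  assume "\<psi> \<in> H" thus ?thesis using carrA by simp
qed

lemma cj_mult: "\<psi> \<in> H \<Longrightarrow> a \<in> H \<Longrightarrow> b \<in> H \<Longrightarrow> cj \<psi> (a \<otimes>\<^bsub>A\<^esub> b) = cj \<psi> a \<otimes>\<^bsub>A\<^esub> cj \<psi> b"
proof -
  interpret A: group A by (rule grpA)
  assume c: "\<psi> \<in> H" "a \<in> H" "b \<in> H"
  hence c': "\<psi> \<in> carrier A" "a \<in> carrier A" "b \<in> carrier A" using carrA by auto
  have "cj \<psi> a \<otimes>\<^bsub>A\<^esub> cj \<psi> b = \<psi> \<otimes>\<^bsub>A\<^esub> a \<otimes>\<^bsub>A\<^esub> (inv\<^bsub>A\<^esub> \<psi> \<otimes>\<^bsub>A\<^esub> \<psi>) \<otimes>\<^bsub>A\<^esub> b \<otimes>\<^bsub>A\<^esub> inv\<^bsub>A\<^esub> \<psi>"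
    using c' by (simp add: A.m_assoc A.inv_solve_left')
  also have "\<dots> = cj \<psi> (a \<otimes>\<^bsub>A\<^esub> b)" using c' by (simp add: A.m_assoc[symmetric])
  finally show ?thesis by simp
qed

lemma cj_inv: "\<psi> \<in> H \<Longrightarrow> a \<in> H \<Longrightarrow> cj \<psi> (inv\<^bsub>A\<^esub> a) = inv\<^bsub>A\<^esub> (cj \<psi> a)"
proof -
  interpret A: group A by (rule grpA)
  assume c: "\<psi> \<in> H" "a \<in> H"
  hence c': "\<psi> \<in> carrier A" "a \<in> carrier A" using carrA by auto
  thus ?thesis by (simp add: A.m_assoc A.inv_mult_group)
qed

lemma cj_cj: "\<psi> \<in> H \<Longrightarrow> x \<in> H \<Longrightarrow> a \<in> H \<Longrightarrow> cj \<psi> (cj x a) = cj (\<psi> \<otimes>\<^bsub>A\<^esub> x) a"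
proof -
  interpret A: group A by (rule grpA)
  assume c: "\<psi> \<in> H" "x \<in> H" "a \<in> H"
  hence c': "\<psi> \<in> carrier A" "x \<in> carrier A" "a \<in> carrier A" using carrA by auto
  thus ?thesis by (simp add: A.m_assoc A.inv_mult_group)
qed

lemma FCd_iff: assumes U: "U \<in> COS G T"
  shows "\<phi> \<in> FCd G T H \<longleftrightarrow> \<phi> \<in> H \<and> (\<exists>R. \<forall>\<psi>\<in>H. real (dd ((cj \<psi> \<phi>) ` U) U) \<le> R)"
proof (cases "\<phi> \<in> H")
  case True
  have sub: "{cj \<psi> \<phi> | \<psi>. \<psi> \<in> H} \<subseteq> H" using cj_closed True by blast
  show ?thesis unfolding FCd_def using bounded_iff[OF sub U] True by auto
qed (simp add: FCd_def)

lemma FCd_normal: assumes U: "U \<in> COS G T"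
  shows "FCd G T H \<lhd> A"
proof -
  interpret A: group A by (rule grpA)
  have sub: "FCd G T H \<subseteq> carrier A" using carrA by (auto simp: FCd_def)
  have one: "\<one>\<^bsub>A\<^esub> \<in> FCd G T H"
    unfolding FCd_iff[OF U] using cj_one A.one_closed carrA by auto
  have inv: "inv\<^bsub>A\<^esub> a \<in> FCd G T H" if a: "a \<in> FCd G T H" for a
  proof -
    obtain R where aH: "a \<in> H" and R: "\<forall>\<psi>\<in>H. real (dd ((cj \<psi> a) ` U) U) \<le> R"
      using a FCd_iff[OF U] by blast
    have "real (dd ((cj \<psi> (inv\<^bsub>A\<^esub> a)) ` U) U) \<le> R" if "\<psi> \<in> H" for \<psi>
      using R that cj_inv[OF that aH] dd_invA[OF cj_closed[OF that aH] U] by simp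
    thus ?thesis unfolding FCd_iff[OF U] using invA_closed aH by blast
  qed
  have mult: "a \<otimes>\<^bsub>A\<^esub> b \<in> FCd G T H" if a: "a \<in> FCd G T H" and b: "b \<in> FCd G T H" for a b
  proof -
    obtain R where aH: "a \<in> H" and R: "\<forall>\<psi>\<in>H. real (dd ((cj \<psi> a) ` U) U) \<le> R"
      using a FCd_iff[OF U] by blast
    obtain S where bH: "b \<in> H" and S: "\<forall>\<psi>\<in>H. real (dd ((cj \<psi> b) ` U) U) \<le> S"
      using b FCd_iff[OF U] by blast
    have "real (dd ((cj \<psi> (a \<otimes>\<^bsub>A\<^esub> b)) ` U) U) \<le> S * R" if p: "\<psi> \<in> H" for \<psi>
    proof -
      have "dd ((cj \<psi> (a \<otimes>\<^bsub>A\<^esub> b)) ` U) U \<le> dd ((cj \<psi> b) ` U) U * dd ((cj \<psi> a) ` U) U"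
        using cj_mult[OF p aH bH] dd_mult[OF cj_closed[OF p aH] cj_closed[OF p bH] U] by simp
      hence "real (dd ((cj \<psi> (a \<otimes>\<^bsub>A\<^esub> b)) ` U) U) \<le> real (dd ((cj \<psi> b) ` U) U) * real (dd ((cj \<psi> a) ` U) U)"
        by (metis of_nat_le_iff of_nat_mult)
      also have "\<dots> \<le> S * R" using R S p by (intro mult_mono) auto
      finally show ?thesis .
    qed
    thus ?thesis unfolding FCd_iff[OF U] using A.m_closed aH bH carrA by blast
  qed
  have sg: "subgroup (FCd G T H) A"
    using A.subgroupI[OF sub _ inv mult] one by blast
  have "x \<otimes>\<^bsub>A\<^esub> h \<otimes>\<^bsub>A\<^esub> inv\<^bsub>A\<^esub> x \<in> FCd G T H" if x: "x \<in> carrier A" and h: "h \<in> FCd G T H" for x h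
  proof -
    obtain R where hH: "h \<in> H" and R: "\<forall>\<psi>\<in>H. real (dd ((cj \<psi> h) ` U) U) \<le> R"
      using h FCd_iff[OF U] by blast
    have xH: "x \<in> H" using x carrA by simp
    have "real (dd ((cj \<psi> (cj x h)) ` U) U) \<le> R" if p: "\<psi> \<in> H" for \<psi>
      using cj_cj[OF p xH hH] R A.m_closed p xH carrA by simp
    thus ?thesis unfolding FCd_iff[OF U] using cj_closed xH hH by blast
  qed
  thus ?thesis using A.normal_inv_iff sg by blast
qed

end


context setting begin

lemma img_cj: "k \<in> H \<Longrightarrow> \<xi> \<in> H \<Longrightarrow> S \<subseteq> carrier G \<Longrightarrow> (cj k \<xi>) ` S = k ` (\<xi> ` ((inv\<^bsub>A\<^esub> k) ` S))"
proof -
  interpret A: group A by (rule grpA)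
  assume k: "k \<in> H" and c: "\<xi> \<in> H" and S: "S \<subseteq> carrier G"
  have kc: "k \<otimes>\<^bsub>A\<^esub> \<xi> \<in> H" using k c carrA A.m_closed by metis
  have "(cj k \<xi>) ` S = (k \<otimes>\<^bsub>A\<^esub> \<xi>) ` ((inv\<^bsub>A\<^esub> k) ` S)"
    using img_mult[OF kc invA_closed[OF k] S] .
  also have "\<dots> = k ` (\<xi> ` ((inv\<^bsub>A\<^esub> k) ` S))"
    using img_mult[OF k c] H_funcset[OF invA_closed[OF k] S] by simp
  finally show ?thesis .
qed

definition Sset where "Sset \<xi> = {n. \<exists>V\<in>COS G T. n = idx G (\<xi> ` V) (\<xi> ` V \<inter> V)}"

lemma scale_Sset: "scale G T \<xi> = (LEAST n. n \<in> Sset \<xi>)"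
  by (simp add: scale_def Sset_def)

lemma Sset_incl: assumes k: "k \<in> H" and c: "\<xi> \<in> H" shows "Sset \<xi> \<subseteq> Sset (cj k \<xi>)"
proof
  fix n assume "n \<in> Sset \<xi>"
  then obtain V where V: "V \<in> COS G T" and n: "n = idx G (\<xi> ` V) (\<xi> ` V \<inter> V)"
    by (auto simp: Sset_def)
  have Vc: "V \<subseteq> carrier G" using COS_carr V .
  have W: "k ` V \<in> COS G T" using img_COS k V .
  have "(cj k \<xi>) ` (k ` V) = k ` (\<xi> ` V)"
    using img_cj[OF k c H_funcset[OF k Vc]] img_inv[OF k Vc] by simp
  hence "idx G ((cj k \<xi>) ` (k ` V)) ((cj k \<xi>) ` (k ` V) \<inter> k ` V) = card (cs (k ` (\<xi> ` V)) (k ` V))"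
    by (simp add: idx_cs)
  also have "\<dots> = card (cs (\<xi> ` V) V)" using card_cs_img[OF k img_COS[OF c V] V] .
  also have "\<dots> = n" using n by (simp add: idx_cs)
  finally show "n \<in> Sset (cj k \<xi>)" unfolding Sset_def using W by force
qed

lemma scale_cj: assumes k: "k \<in> H" and c: "\<xi> \<in> H" shows "scale G T (cj k \<xi>) = scale G T \<xi>"
proof -
  interpret A: group A by (rule grpA)
  have ik: "inv\<^bsub>A\<^esub> k \<in> H" using invA_closed k .
  have "cj (inv\<^bsub>A\<^esub> k) (cj k \<xi>) = \<xi>"
    using cj_cj[OF ik k c] k c carrA by simp
  hence "Sset (cj k \<xi>) \<subseteq> Sset \<xi>" using Sset_incl[OF ik cj_closed[OF k c]] by simp
  hence "Sset (cj k \<xi>) = Sset \<xi>" using Sset_incl[OF k c] by blast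
  thus ?thesis by (simp add: scale_Sset)
qed

lemma dd_cj: assumes g: "g \<in> H" and Y: "Y \<in> H" and U: "U \<in> COS G T"
  shows "dd ((cj g Y) ` U) U \<le> dd (g ` U) U * dd (Y ` U) U * dd (g ` U) U"
proof -
  interpret A: group A by (rule grpA)
  have gX: "g \<otimes>\<^bsub>A\<^esub> Y \<in> H" using g Y carrA A.m_closed by metis
  have "dd ((cj g Y) ` U) U \<le> dd ((inv\<^bsub>A\<^esub> g) ` U) U * dd ((g \<otimes>\<^bsub>A\<^esub> Y) ` U) U"
    using dd_mult[OF gX invA_closed[OF g] U] .
  also have "\<dots> \<le> dd (g ` U) U * (dd (Y ` U) U * dd (g ` U) U)"
    using dd_invA[OF g U] dd_mult[OF g Y U] by simp
  finally show ?thesis by (simp add: mult.assoc)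
qed

lemma dd_flat: assumes K: "subgroup K A" and U: "U \<in> COS G T"
  and fl: "\<forall>\<phi>\<in>K. idx G (\<phi> ` U) (\<phi> ` U \<inter> U) = scale G T \<phi>"
  and \<phi>: "\<phi> \<in> K" and k: "k \<in> K"
  shows "dd ((cj k \<phi>) ` U) U = scale G T \<phi> * scale G T (inv\<^bsub>A\<^esub> \<phi>)"
proof -
  interpret A: group A by (rule grpA)
  have KH: "K \<subseteq> H" using subgroup.subset[OF K] carrA by simp
  have XK: "cj k \<phi> \<in> K" using K \<phi> k by (simp add: subgroup.m_closed subgroup.m_inv_closed)
  have iK: "cj k (inv\<^bsub>A\<^esub> \<phi>) \<in> K" using K \<phi> k by (simp add: subgroup.m_closed subgroup.m_inv_closed)
  have kH: "k \<in> H" and pH: "\<phi> \<in> H" using KH k \<phi> by auto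
  have ipH: "inv\<^bsub>A\<^esub> \<phi> \<in> H" using invA_closed pH .
  let ?Z = "cj k \<phi>"
  have XH: "?Z \<in> H" using XK KH by auto
  have Uc: "U \<subseteq> carrier G" using COS_carr U .
  have 1: "card (cs (?Z ` U) U) = scale G T \<phi>"
    using fl XK scale_cj[OF kH pH] idx_cs by metis
  have "card (cs U (?Z ` U)) = card (cs ((inv\<^bsub>A\<^esub> ?Z) ` U) ((inv\<^bsub>A\<^esub> ?Z) ` (?Z ` U)))"
    using card_cs_img[OF invA_closed[OF XH] U img_COS[OF XH U]] by simp
  also have "\<dots> = card (cs ((cj k (inv\<^bsub>A\<^esub> \<phi>)) ` U) U)"
    using img_inv[OF XH Uc] cj_inv[OF kH pH] by simp
  also have "\<dots> = scale G T (inv\<^bsub>A\<^esub> \<phi>)"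
    using fl iK scale_cj[OF kH ipH] idx_cs by metis
  finally show ?thesis using 1 by (simp add: dd_def)
qed

lemma K_sub_FCd: assumes K: "subgroup K A" and U: "U \<in> COS G T"
  and fl: "\<forall>\<phi>\<in>K. idx G (\<phi> ` U) (\<phi> ` U \<inter> U) = scale G T \<phi>"
  and fin: "finite (rcosets\<^bsub>A\<^esub> K)"
  shows "K \<subseteq> FCd G T H"
proof
  interpret A: group A by (rule grpA)
  have KH: "K \<subseteq> H" using subgroup.subset[OF K] carrA by simp
  fix \<phi> assume \<phi>: "\<phi> \<in> K"
  define c where "c = scale G T \<phi> * scale G T (inv\<^bsub>A\<^esub> \<phi>)"
  define f where "f = (\<lambda>C. SOME h. h \<in> H \<and> C = K #>\<^bsub>A\<^esub> h)"
  define R where "R = c * (\<Sum>C\<in>rcosets\<^bsub>A\<^esub> K. dd (f C ` U) U * dd (f C ` U) U)"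
  have "real (dd ((cj \<psi> \<phi>) ` U) U) \<le> real R" if \<psi>: "\<psi> \<in> H" for \<psi>
  proof -
    have ip: "inv\<^bsub>A\<^esub> \<psi> \<in> H" using invA_closed \<psi> .
    let ?C = "K #>\<^bsub>A\<^esub> inv\<^bsub>A\<^esub> \<psi>"
    have C: "?C \<in> rcosets\<^bsub>A\<^esub> K" using ip carrA by (auto simp: RCOSETS_def)
    have "\<exists>h. h \<in> H \<and> ?C = K #>\<^bsub>A\<^esub> h" using ip by blast
    hence fC: "f ?C \<in> H" "?C = K #>\<^bsub>A\<^esub> f ?C" unfolding f_def by (metis (mono_tags, lifting) someI_ex)+
    define h where "h = f ?C"
    have fC: "h \<in> H" "?C = K #>\<^bsub>A\<^esub> h" using fC unfolding h_def by auto
    have "inv\<^bsub>A\<^esub> \<psi> \<in> K #>\<^bsub>A\<^esub> h" using A.rcos_self[OF _ K] ip carrA fC by auto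
    then obtain k where k: "k \<in> K" "inv\<^bsub>A\<^esub> \<psi> = k \<otimes>\<^bsub>A\<^esub> h" by (auto simp: r_coset_def)
    have kH: "k \<in> H" using k KH by auto
    have ikK: "inv\<^bsub>A\<^esub> k \<in> K" using K k by (simp add: subgroup.m_inv_closed)
    have ikH: "inv\<^bsub>A\<^esub> k \<in> H" using ikK KH by auto
    have ihH: "inv\<^bsub>A\<^esub> h \<in> H" using invA_closed fC(1) .
    have "\<psi> = inv\<^bsub>A\<^esub> (inv\<^bsub>A\<^esub> \<psi>)" using \<psi> carrA by simp
    also have "\<dots> = inv\<^bsub>A\<^esub> h \<otimes>\<^bsub>A\<^esub> inv\<^bsub>A\<^esub> k" using k(2) kH fC(1) carrA by (simp add: A.inv_mult_group)
    finally have psi: "\<psi> = inv\<^bsub>A\<^esub> h \<otimes>\<^bsub>A\<^esub> inv\<^bsub>A\<^esub> k" .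
    have pH: "\<phi> \<in> H" using \<phi> KH by auto
    have cjeq: "cj \<psi> \<phi> = cj (inv\<^bsub>A\<^esub> h) (cj (inv\<^bsub>A\<^esub> k) \<phi>)"
      using cj_cj[OF ihH ikH pH] psi by simp
    have XH: "cj (inv\<^bsub>A\<^esub> k) \<phi> \<in> H" using cj_closed ikH pH by blast
    have ddX: "dd ((cj (inv\<^bsub>A\<^esub> k) \<phi>) ` U) U = c" using dd_flat[OF K U fl \<phi> ikK] c_def by simp
    have "dd ((cj \<psi> \<phi>) ` U) U \<le> dd ((inv\<^bsub>A\<^esub> h) ` U) U * c * dd ((inv\<^bsub>A\<^esub> h) ` U) U"
      using dd_cj[OF ihH XH U] cjeq ddX by simp
    also have "\<dots> = c * (dd (f ?C ` U) U * dd (f ?C ` U) U)"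
      using dd_invA[OF fC(1) U] h_def by simp
    also have "\<dots> \<le> R" unfolding R_def
      using C fin by (intro mult_le_mono2 member_le_sum) auto
    finally show ?thesis by simp
  qed
  thus "\<phi> \<in> FCd G T H" unfolding FCd_iff[OF U] using \<phi> KH by blast
qed

lemma fin_index_super: assumes K: "subgroup K A" and F: "subgroup F A" and KF: "K \<subseteq> F"
  and fin: "finite (rcosets\<^bsub>A\<^esub> K)"
  shows "finite (rcosets\<^bsub>A\<^esub> F)"
proof -
  interpret A: group A by (rule grpA)
  have FK: "F <#>\<^bsub>A\<^esub> K = F"
  proof
    show "F <#>\<^bsub>A\<^esub> K \<subseteq> F" using F K KF
      by (auto simp: set_mult_def intro: subgroup.m_closed)
    show "F \<subseteq> F <#>\<^bsub>A\<^esub> K"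
    proof
      fix x assume x: "x \<in> F"
      hence "x = x \<otimes>\<^bsub>A\<^esub> \<one>\<^bsub>A\<^esub>" using subgroup.subset[OF F] by auto
      thus "x \<in> F <#>\<^bsub>A\<^esub> K" using x subgroup.one_closed[OF K] unfolding set_mult_def by blast
    qed
  qed
  have "rcosets\<^bsub>A\<^esub> F \<subseteq> (\<lambda>C. F <#>\<^bsub>A\<^esub> C) ` (rcosets\<^bsub>A\<^esub> K)"
  proof
    fix D assume "D \<in> rcosets\<^bsub>A\<^esub> F"
    then obtain h where h: "h \<in> carrier A" "D = F #>\<^bsub>A\<^esub> h" by (auto simp: RCOSETS_def)
    have "F <#>\<^bsub>A\<^esub> (K #>\<^bsub>A\<^esub> h) = D"
      using A.setmult_rcos_assoc[OF subgroup.subset[OF F] subgroup.subset[OF K] h(1)] FK h(2) by simp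
    moreover have "K #>\<^bsub>A\<^esub> h \<in> rcosets\<^bsub>A\<^esub> K" using h(1) by (auto simp: RCOSETS_def)
    ultimately show "D \<in> (\<lambda>C. F <#>\<^bsub>A\<^esub> C) ` (rcosets\<^bsub>A\<^esub> K)" by blast
  qed
  thus ?thesis using fin finite_subset by blast
qed

end

theorem lemma3:
  fixes G :: "('a, 'b) monoid_scheme" and T :: "'a topology" and H :: "('a \<Rightarrow> 'a) set"
  assumes "tdlc_group G T"
    and "H \<subseteq> top_aut G T"
    and "subgroup H (BijGroup (carrier G))"
    and "virtually_flat G T H"
  shows "FCd G T H \<lhd> aut_grp G H
    \<and> (\<forall>K. subgroup K (aut_grp G H) \<and> flat G T K \<and> finite_index (aut_grp G H) K
           \<longrightarrow> K \<subseteq> FCd G T H)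
    \<and> finite_index (aut_grp G H) (FCd G T H)"
proof -
  have gG: "group G" using assms(1) by (simp add: tdlc_group_def)
  interpret S: setting G T H
    using assms(1-3) gG by (simp add: setting_def setting_axioms_def)
  obtain K where K: "subgroup K (aut_grp G H)" "flat G T K" "finite_index (aut_grp G H) K"
    using assms(4) unfolding virtually_flat_def by blast
  obtain U where U: "U \<in> COS G T" "\<forall>\<phi>\<in>K. idx G (\<phi> ` U) (\<phi> ` U \<inter> U) = scale G T \<phi>"
    using K(2) unfolding flat_def by blast
  have N: "FCd G T H \<lhd> aut_grp G H" using S.FCd_normal[OF U(1)] .
  have all: "\<forall>K. subgroup K (aut_grp G H) \<and> flat G T K \<and> finite_index (aut_grp G H) K
           \<longrightarrow> K \<subseteq> FCd G T H"
    using S.K_sub_FCd unfolding flat_def finite_index_def by blast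
  have "K \<subseteq> FCd G T H" using all K by blast
  hence "finite_index (aut_grp G H) (FCd G T H)"
    using S.fin_index_super[OF K(1) normal_imp_subgroup[OF N]] K(3)
    unfolding finite_index_def by blast
  thus ?thesis using N all by blast
qed


end
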